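(* Let $F_n:\mathcal{Y}\to[-\infty,0]$, $n\in\mathbb{N}$, satisfy the separated subadditivity condition (S). Then for every $k\in\mathbb{N}$, every integer $\ell>\ell_0$ and every $y\in\mathcal{Y}$, $$\limsup_{n\to\infty}\frac{F_{(n-1)\ell+nk}(y)}{n}\ge\alpha(\ell)(k+\ell)\limsup_{n\to\infty}\frac{F_n(y)}{n}.$$
   Context: Discrete time: $\Psi:\mathcal{Y}\to\mathcal{Y}$ measurable. Condition (S): there exist $\ell_0\ge0$ and a non-increasing $\alpha:[\ell_0,\infty)\to[1,\infty)$ with $\lim_{\ell\to\infty}\alpha(\ell)=1$ such that for all $n\ge1$, all $t_1,\dots,t_n\in\mathbb{N}$, all integers $\ell>\ell_0$ and all $y$, $$F_{(n-1)\ell+\sum_{k=1}^nt_k}(y)\le\frac{1}{\alpha(\ell)}\sum_{k=1}^nF_{t_k}\big(\Psi^{(k-1)\ell+\sum_{j=1}^{k-1}t_j}y\big).$$ *)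

theory Defs
  imports "HOL-Analysis.Analysis"
begin

definition cond_S ::
  "'y measure \<Rightarrow> ('y \<Rightarrow> 'y) \<Rightarrow> (nat \<Rightarrow> 'y \<Rightarrow> ereal) \<Rightarrow> real \<Rightarrow> (real \<Rightarrow> real) \<Rightarrow> bool" where
  "cond_S M Psi F l0 alpha \<longleftrightarrow>
     l0 \<ge> 0 \<and>
     (\<forall>x\<in>{l0..}. \<forall>x'\<in>{l0..}. x \<le> x' \<longrightarrow> alpha x' \<le> alpha x) \<and>
     (\<forall>x\<in>{l0..}. alpha x \<ge> 1) \<and>
     (alpha \<longlongrightarrow> 1) at_top \<and>
     (\<forall>n::nat. \<forall>t::nat \<Rightarrow> nat. \<forall>l::nat. \<forall>y\<in>space M.
        n \<ge> 1 \<longrightarrow> real l > l0 \<longrightarrow>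
        F ((n - 1) * l + (\<Sum>k=1..n. t k)) y
          \<le> ereal (1 / alpha (real l)) *
             (\<Sum>k=1..n. F (t k) ((Psi ^^ ((k - 1) * l + (\<Sum>j=1..k-1. t j))) y)))"

end

theory Submission
  imports Defs "HOL-Real_Asymp.Real_Asymp"
begin

lemma limsup_comp_le:
  fixes a :: "nat \<Rightarrow> ereal"
  assumes g: "filterlim g sequentially sequentially"
  shows "limsup (\<lambda>N. a (g N)) \<le> limsup a"
proof -
  have "Limsup sequentially (\<lambda>N. a (g N)) \<le> Limsup (filtermap g sequentially) a"
    by (rule Limsup_filtermap_ge)
  also have "\<dots> \<le> Limsup sequentially a"
    unfolding Limsup_def
  proof (rule INF_mono)
    fix P assume "P \<in> {P. eventually P sequentially}"
    then have "eventually P (filtermap g sequentially)"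
      using g unfolding filterlim_def by (auto simp: le_filter_def)
    then show "\<exists>Q\<in>{P. eventually P (filtermap g sequentially)}. (SUP x\<in>Collect Q. a x) \<le> (SUP x\<in>Collect P. a x)"
      by blast
  qed
  finally show ?thesis .
qed

lemma funpow_space:
  assumes "Psi \<in> M \<rightarrow>\<^sub>M M" "y \<in> space M"
  shows "(Psi ^^ j) y \<in> space M"
  using assms by (induction j) (auto simp: measurable_space)

theorem lemmaD2:
  fixes M :: "'y measure" and Psi :: "'y \<Rightarrow> 'y" and F :: "nat \<Rightarrow> 'y \<Rightarrow> ereal"
    and l0 :: real and alpha :: "real \<Rightarrow> real"
  assumes Psi_meas: "Psi \<in> M \<rightarrow>\<^sub>M M"
    and F_range: "\<And>n y. y \<in> space M \<Longrightarrow> F n y \<le> 0"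
    and S: "cond_S M Psi F l0 alpha"
    and l: "real l > l0"
    and y: "y \<in> space M"
  shows "limsup (\<lambda>n. F ((n - 1) * l + n * k) y / ereal (real n))
           \<ge> ereal (alpha (real l) * (real k + real l)) * limsup (\<lambda>n. F n y / ereal (real n))"
proof -
  define m where "m = k + l"
  define al where "al = alpha (real l)"
  have l0: "l0 \<ge> 0" and al1: "al \<ge> 1" using S l unfolding cond_S_def al_def by auto
  have lpos: "l \<ge> 1" using l l0 by simp
  have mpos: "m \<ge> 1" using lpos m_def by simp
  have Sn: "\<And>n t. n \<ge> 1 \<Longrightarrow> F ((n - 1) * l + (\<Sum>k=1..n. t k)) y
          \<le> ereal (1 / al) *
             (\<Sum>k=1..n. F (t k) ((Psi ^^ ((k - 1) * l + (\<Sum>j=1..k-1. t j))) y))"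
    using S l y unfolding cond_S_def al_def by blast
  define a where "a = (\<lambda>n. F ((n - 1) * l + n * k) y / ereal (real n))"
  define b where "b = (\<lambda>n. F n y / ereal (real n))"
  define g where "g = (\<lambda>N::nat. N div m)"
  define u where "u = (\<lambda>N. ereal (al * real N / real (g N)))"
  have key: "a (g N) \<ge> u N * b N" if N: "N \<ge> m" for N
  proof -
    define n where "n = g N"
    have n1: "n \<ge> 1" using N mpos unfolding n_def g_def
      using div_greater_zero_iff[of N m] by simp
    have nm: "n * m \<le> N" unfolding n_def g_def using div_mult_mod_eq[of N m] by linarith
    define t1 where "t1 = (n - 1) * l + n * k"
    define t where "t = (\<lambda>i::nat. if i = 1 then t1 else N - n * m)"
    have t1l: "t1 + l = n * m" using n1 unfolding t1_def m_def
      by (cases n) (auto simp: algebra_simps)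
    have "(2 - 1) * l + (\<Sum>k=1..2. t k) = N"
      using t1l nm by (simp add: t_def numeral_2_eq_2)
    then have "F N y \<le> ereal (1 / al) *
             (\<Sum>k=1..2. F (t k) ((Psi ^^ ((k - 1) * l + (\<Sum>j=1..k-1. t j))) y))"
      using Sn[of 2 t] by simp
    also have "\<dots> = ereal (1 / al) * (F t1 y + F (N - n*m) ((Psi ^^ (l + t1)) y))"
      by (simp add: t_def numeral_2_eq_2)
    finally have W: "F N y \<le> ereal (1 / al) * (F t1 y + F (N - n*m) ((Psi ^^ (l + t1)) y))" .
    have Z: "F (N - n*m) ((Psi ^^ (l + t1)) y) \<le> 0"
      using F_range funpow_space[OF Psi_meas y] by blast
    have X: "F t1 y \<le> 0" using F_range y by blast
    have "F t1 y + F (N - n*m) ((Psi ^^ (l + t1)) y) \<le> F t1 y"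
      using Z add_left_mono by fastforce
    then have "ereal (1 / al) * (F t1 y + F (N - n*m) ((Psi ^^ (l + t1)) y)) \<le> ereal (1/al) * F t1 y"
      using al1 by (intro ereal_mult_left_mono) auto
    with W have W2: "F N y \<le> ereal (1/al) * F t1 y" by simp
    have Npos: "N > 0" using N mpos by simp
    have "F t1 y / ereal (real n) \<ge> ereal (al * real N / real n) * (F N y / ereal (real N))"
    proof (cases "F t1 y")
      case (real r)
      then show ?thesis using W2 X al1 n1 Npos F_range[OF y, of N]
      proof (cases "F N y")
        case (real w)
        have "w \<le> r / al" using W2 \<open>F t1 y = ereal r\<close> real by simp
        then have "al * w \<le> r" using al1 by (simp add: field_simps)
        then have "al * w / n \<le> r / n" using n1 by (simp add: divide_right_mono)
        then show ?thesis using \<open>F t1 y = ereal r\<close> real Npos n1 by simp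
      qed auto
    next
      case PInf then show ?thesis using X by simp
    next
      case MInf
      then have "F N y = - \<infinity>" using W2 al1 by (simp)
      then show ?thesis using MInf al1 Npos n1 by simp
    qed
    then show ?thesis unfolding a_def b_def u_def n_def t1_def by simp
  qed
  have gt: "filterlim g sequentially sequentially"
    unfolding filterlim_at_top g_def
  proof
    fix Z :: nat
    show "eventually (\<lambda>x. Z \<le> x div m) sequentially"
      using eventually_ge_at_top[of "Z * m"]
      by eventually_elim (use mpos div_le_mono[of "Z*m" _ m] in simp)
  qed
  have ut: "u \<longlonglongrightarrow> ereal (al * real m)"
  proof -
    have "(\<lambda>N. real N / real (g N)) \<longlonglongrightarrow> real m"
    proof (rule tendsto_sandwich[of "\<lambda>_. real m" _ _ "\<lambda>N. real m * real N / (real N - real m)"])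
      show "eventually (\<lambda>N. real m \<le> real N / real (g N)) sequentially"
        using eventually_ge_at_top[of m]
      proof eventually_elim
        case (elim N)
        have "g N * m \<le> N" unfolding g_def by simp
        moreover have "g N > 0" using elim mpos unfolding g_def
          using div_greater_zero_iff[of N m] by simp
        ultimately show ?case
          by (simp add: field_simps) (metis of_nat_le_iff of_nat_mult mult.commute)
      qed
      show "eventually (\<lambda>N. real N / real (g N) \<le> real m * real N / (real N - real m)) sequentially"
        using eventually_gt_at_top[of m]
      proof eventually_elim
        case (elim N)
        have "N mod m < m" using mpos by simp
        moreover have "m * (N div m) + N mod m = N" by (rule mult_div_mod_eq)
        ultimately have "N < m * g N + m" unfolding g_def by linarith
        then have A: "real N < real m * real (g N) + real m"
          by (metis of_nat_add of_nat_less_iff of_nat_mult)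
        have "g N > 0" using elim mpos unfolding g_def
          using div_greater_zero_iff[of N m] by simp
        have B: "real N * real N \<le> real N * (real m * real (g N) + real m)"
          by (rule mult_left_mono) (use A in auto)
        then show ?case using A elim \<open>g N > 0\<close>
          by (simp add: field_simps distrib_left)
      qed
      show "(\<lambda>N. real m * real N / (real N - real m)) \<longlonglongrightarrow> real m"
        using mpos by real_asymp
    qed simp
    then have "(\<lambda>N. al * (real N / real (g N))) \<longlonglongrightarrow> al * real m"
      by (intro tendsto_mult) auto
    then show ?thesis unfolding u_def by (simp add: tendsto_ereal)
  qed
  have "limsup a \<ge> limsup (\<lambda>N. a (g N))" by (rule limsup_comp_le[OF gt])
  moreover have ev: "eventually (\<lambda>N. u N * b N \<le> a (g N)) sequentially"
    using eventually_ge_at_top[of m] by eventually_elim (rule key)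
  moreover have "limsup (\<lambda>N. a (g N)) \<ge> limsup (\<lambda>N. u N * b N)"
    using ev by (rule Limsup_mono)
  moreover have "limsup (\<lambda>N. u N * b N) = ereal (al * real m) * limsup b"
    using ut al1 mpos by (intro ereal_limsup_lim_mult) auto
  ultimately show ?thesis unfolding a_def b_def al_def m_def by simp
qed

end
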